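(* Let $L,U\in\mathbb{P}_d$ with $L\prec U$ and let $S\in\mathbb{H}_d$ be arbitrary. Write $U-L=P^*P$ and take an eigendecomposition $PSP^*=Q\Lambda Q^*$ with $Q$ unitary and $\Lambda$ real diagonal. Then a solution of $$\max_{L\preceq Z\preceq U}\ \operatorname{tr}(SZ)$$ is given by $Z=L+P^*Q[\operatorname{sgn}(\Lambda)]_+Q^*P$.
   Context: $\mathbb{H}_d$ denotes the $d\times d$ Hermitian matrices and $\mathbb{P}_d$ the $d\times d$ Hermitian positive definite matrices; $\preceq$ ($\prec$) is the Löwner order ($A\preceq B$ iff $B-A$ is positive semidefinite, $A\prec B$ iff $B-A$ is positive definite). For real diagonal $\Lambda$, $[\operatorname{sgn}(\Lambda)]_+$ is the diagonal matrix with $i$-th diagonal entry $1$ if $\lambda_{ii}>0$ and $0$ otherwise. *)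

theory Defs
  imports "HOL-Analysis.Analysis"
begin

text \<open>d x d complex matrices are modelled as complex^'n^'n with 'n a finite index type (d = CARD('n)).\<close>

definition cadj :: "complex^'n^'m \<Rightarrow> complex^'m^'n" where
  "cadj A = (\<chi> i j. cnj (A $ j $ i))"

definition hermitian :: "complex^'n^'n \<Rightarrow> bool" where
  "hermitian A \<longleftrightarrow> cadj A = A"

definition qform :: "complex^'n^'n \<Rightarrow> complex^'n \<Rightarrow> complex" where
  "qform A x = (\<Sum>i\<in>UNIV. cnj (x $ i) * (A *v x) $ i)"

definition psd :: "complex^'n^'n \<Rightarrow> bool" where
  "psd A \<longleftrightarrow> hermitian A \<and> (\<forall>x. 0 \<le> Re (qform A x))"

definition pd :: "complex^'n^'n \<Rightarrow> bool" where
  "pd A \<longleftrightarrow> hermitian A \<and> (\<forall>x. x \<noteq> 0 \<longrightarrow> 0 < Re (qform A x))"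

definition loewner_le :: "complex^'n^'n \<Rightarrow> complex^'n^'n \<Rightarrow> bool" where
  "loewner_le A B \<longleftrightarrow> psd (B - A)"

definition loewner_lt :: "complex^'n^'n \<Rightarrow> complex^'n^'n \<Rightarrow> bool" where
  "loewner_lt A B \<longleftrightarrow> pd (B - A)"

definition unitary :: "complex^'n^'n \<Rightarrow> bool" where
  "unitary Q \<longleftrightarrow> cadj Q ** Q = mat 1 \<and> Q ** cadj Q = mat 1"

definition cdiag :: "complex^'n \<Rightarrow> complex^'n^'n" where
  "cdiag v = (\<chi> i j. if i = j then v $ i else 0)"

definition sgn_plus :: "real^'n \<Rightarrow> complex^'n^'n" where
  "sgn_plus lam = cdiag (\<chi> i. if lam $ i > 0 then 1 else 0)"

end

theory Submission imports Defs begin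

lemma cadj_cadj[simp]: "cadj (cadj A) = A"
  by (simp add: cadj_def vec_eq_iff)

lemma cadj_mult: "cadj (A ** B) = cadj B ** cadj A"
  by (simp add: cadj_def vec_eq_iff matrix_matrix_mult_def mult.commute)

lemma cadj_add: "cadj (A + B) = cadj A + cadj B"
  by (simp add: cadj_def vec_eq_iff)

lemma cadj_diff: "cadj (A - B) = cadj A - cadj B"
  by (simp add: cadj_def vec_eq_iff)

lemma cadj_mat1[simp]: "cadj (mat 1 :: complex^'n^'n) = mat 1"
  by (simp add: cadj_def vec_eq_iff mat_def)

lemma adj_inner:
  fixes C :: "complex^'n^'m"
  shows "(\<Sum>i\<in>UNIV. cnj (x $ i) * (cadj C *v y) $ i) = (\<Sum>j\<in>UNIV. cnj ((C *v x) $ j) * y $ j)"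
proof -
  have "(\<Sum>i\<in>UNIV. cnj (x $ i) * (cadj C *v y) $ i) = (\<Sum>i\<in>UNIV. \<Sum>j\<in>UNIV. cnj (x $ i) * cnj (C $ j $ i) * y $ j)"
    unfolding cadj_def matrix_vector_mult_def by (simp add: sum_distrib_left mult.assoc)
  also have "\<dots> = (\<Sum>j\<in>UNIV. \<Sum>i\<in>UNIV. cnj (x $ i) * cnj (C $ j $ i) * y $ j)"
    by (rule sum.swap)
  also have "\<dots> = (\<Sum>j\<in>UNIV. cnj ((C *v x) $ j) * y $ j)"
    unfolding matrix_vector_mult_def by (simp add: sum_distrib_left mult_ac)
  finally show ?thesis .
qed

lemma qform_cong:
  fixes C :: "complex^'n^'m" and A :: "complex^'m^'m"
  shows "qform (cadj C ** A ** C) x = qform A (C *v x)"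
proof -
  have "(cadj C ** A ** C) *v x = cadj C *v (A *v (C *v x))"
    by (simp add: matrix_vector_mul_assoc matrix_mul_assoc)
  then show ?thesis unfolding qform_def by (simp add: adj_inner)
qed

lemma qform_diff: "qform (A - B) x = qform A x - qform B x"
  unfolding qform_def by (simp add: matrix_vector_mult_def algebra_simps sum_subtractf)

lemma qform_mat1: "qform (mat 1) x = (\<Sum>i\<in>UNIV. (x $ i * cnj (x $ i)))"
  unfolding qform_def by (simp add: complex_norm_square mult.commute)

lemma qform_axis: "qform X (axis i 1) = X $ i $ i"
  unfolding qform_def matrix_vector_mult_def axis_def
  by (simp add: if_distrib if_distribR cong: if_cong)

lemma trace_cdiag: "trace (cdiag v ** X) = (\<Sum>i\<in>UNIV. v $ i * X $ i $ i)"
  unfolding trace_def cdiag_def matrix_matrix_mult_def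
  by (simp add: if_distrib if_distribR cong: if_cong)

lemma qform_cdiag: "qform (cdiag v) x = (\<Sum>i\<in>UNIV. v $ i * (x $ i * cnj (x $ i)))"
  unfolding qform_def cdiag_def matrix_vector_mult_def
  by (simp add: if_distrib if_distribR complex_norm_square mult_ac cong: if_cong)


lemma mat_diff_ldistrib: "(A::complex^'n^'m) ** (B - C) = A ** B - A ** C"
  by (simp add: vec_eq_iff matrix_matrix_mult_def sum_subtractf algebra_simps)

lemma mat_diff_rdistrib: "((B::complex^'n^'m) - C) ** A = B ** A - C ** A"
  by (simp add: vec_eq_iff matrix_matrix_mult_def sum_subtractf algebra_simps)

lemma psd_cong:
  fixes C :: "complex^'n^'m" and A :: "complex^'m^'m"
  assumes "psd A" shows "psd (cadj C ** A ** C)"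
proof -
  have "hermitian A" using assms by (simp add: psd_def)
  then have "cadj (cadj C ** A ** C) = cadj C ** A ** C"
    by (simp add: cadj_mult hermitian_def matrix_mul_assoc)
  then show ?thesis using assms by (simp add: psd_def hermitian_def qform_cong)
qed

lemma psd_cdiag:
  assumes "\<And>i. 0 \<le> f i"
  shows "psd (cdiag (\<chi> i. complex_of_real (f i)))"
proof -
  have h: "hermitian (cdiag (\<chi> i. complex_of_real (f i)))"
    by (simp add: hermitian_def cadj_def cdiag_def vec_eq_iff)
  have "0 \<le> Re (qform (cdiag (\<chi> i. complex_of_real (f i))) x)" for x
  proof -
    have "Re (qform (cdiag (\<chi> i. complex_of_real (f i))) x) = (\<Sum>i\<in>UNIV. f i * (cmod (x $ i))\<^sup>2)"
      unfolding qform_cdiag by (simp add: complex_norm_square[symmetric] del: of_real_power)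
    also have "\<dots> \<ge> 0" by (intro sum_nonneg mult_nonneg_nonneg assms) simp
    finally show ?thesis .
  qed
  with h show ?thesis by (simp add: psd_def)
qed


theorem theorem7:
  fixes L U S P Q :: "complex^'n^'n" and lam :: "real^'n"
  assumes "pd L" and "pd U" and "loewner_lt L U"
    and "hermitian S"
    and "U - L = cadj P ** P"
    and "unitary Q"
    and "P ** S ** cadj P = Q ** cdiag (\<chi> i. complex_of_real (lam $ i)) ** cadj Q"
  defines "Z \<equiv> L + cadj P ** Q ** sgn_plus lam ** cadj Q ** P"
  shows "loewner_le L Z \<and> loewner_le Z U \<and>
         (\<forall>W. loewner_le L W \<and> loewner_le W U \<longrightarrow>
              Re (trace (S ** W)) \<le> Re (trace (S ** Z)))"
proof -
  define Lam where "Lam = cdiag (\<chi> i. complex_of_real (lam $ i))"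
  have QQ: "Q ** cadj Q = mat 1" and QQ': "cadj Q ** Q = mat 1"
    using assms(6) by (auto simp: unitary_def)
  have QQa: "A ** Q ** cadj Q = A" for A :: "complex^'n^'n"
    by (metis QQ matrix_mul_assoc matrix_mul_rid)
  have QQa': "A ** cadj Q ** Q = A" for A :: "complex^'n^'n"
    by (metis QQ' matrix_mul_assoc matrix_mul_rid)
  have PSP: "P ** S ** cadj P = Q ** Lam ** cadj Q" using assms(7) by (simp add: Lam_def)
  have trf: "trace (S ** (cadj P ** Q ** X ** cadj Q ** P)) = (\<Sum>i\<in>UNIV. complex_of_real (lam $ i) * X $ i $ i)"
    for X
  proof -
    have "trace (S ** (cadj P ** Q ** X ** cadj Q ** P)) = trace ((S ** cadj P ** Q ** X ** cadj Q) ** P)"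
      by (simp add: matrix_mul_assoc)
    also have "\<dots> = trace (P ** (S ** cadj P ** Q ** X ** cadj Q))"
      by (rule trace_mul_sym)
    also have "\<dots> = trace ((P ** S ** cadj P) ** (Q ** X ** cadj Q))"
      by (simp add: matrix_mul_assoc)
    also have "\<dots> = trace (Q ** Lam ** cadj Q ** Q ** X ** cadj Q)"
      by (simp add: PSP matrix_mul_assoc)
    also have "\<dots> = trace (Q ** (Lam ** X ** cadj Q))"
      by (simp add: QQa' matrix_mul_assoc)
    also have "\<dots> = trace (Lam ** X ** cadj Q ** Q)"
      by (rule trace_mul_sym)
    also have "\<dots> = trace (Lam ** X)" by (simp add: QQa')
    finally show ?thesis by (simp add: Lam_def trace_cdiag)
  qed
  define D where "D = sgn_plus lam"
  have D_eq: "D = cdiag (\<chi> i. complex_of_real (if lam $ i > 0 then 1 else 0))"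
    by (simp add: D_def sgn_plus_def cdiag_def vec_eq_iff)
  have D1_eq: "mat 1 - D = cdiag (\<chi> i. complex_of_real (if lam $ i > 0 then 0 else 1))"
    by (simp add: D_def sgn_plus_def cdiag_def mat_def vec_eq_iff)
  have cong_form: "cadj P ** Q ** X ** cadj Q ** P = cadj (cadj Q ** P) ** X ** (cadj Q ** P)" for X
    by (simp add: cadj_mult matrix_mul_assoc)
  have ZL: "Z - L = cadj P ** Q ** D ** cadj Q ** P" by (simp add: Z_def D_def)
  have UZ: "U - Z = cadj P ** Q ** (mat 1 - D) ** cadj Q ** P"
  proof -
    have "U - Z = (U - L) - (Z - L)" by simp
    also have "\<dots> = cadj P ** Q ** mat 1 ** cadj Q ** P - cadj P ** Q ** D ** cadj Q ** P"
      using assms(5) ZL by (simp add: QQa)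
    also have "\<dots> = cadj P ** Q ** (mat 1 - D) ** cadj Q ** P"
      by (simp add: mat_diff_ldistrib mat_diff_rdistrib)
    finally show ?thesis .
  qed
  have le1: "loewner_le L Z"
    unfolding loewner_le_def ZL cong_form D_eq by (intro psd_cong psd_cdiag) simp
  have le2: "loewner_le Z U"
    unfolding loewner_le_def UZ cong_form D1_eq by (intro psd_cong psd_cdiag) simp
  have trZ: "Re (trace (S ** Z)) = Re (trace (S ** L)) + (\<Sum>i\<in>UNIV. if lam $ i > 0 then lam $ i else 0)"
  proof -
    have "S ** Z = S ** L + S ** (cadj P ** Q ** D ** cadj Q ** P)"
      by (simp add: Z_def D_def matrix_add_ldistrib)
    then have "trace (S ** Z) = trace (S ** L) + (\<Sum>i\<in>UNIV. complex_of_real (lam $ i) * D $ i $ i)"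
      by (simp add: trace_add trf)
    then show ?thesis by (auto simp: D_eq cdiag_def intro!: sum.cong)
  qed
  have pdUL: "pd (U - L)" using assms(3) by (simp add: loewner_lt_def)
  have "\<forall>x. P *v x = 0 \<longrightarrow> x = 0"
  proof (intro allI impI)
    fix x assume "P *v x = 0"
    then have "qform (cadj P ** mat 1 ** P) x = 0"
      by (simp only: qform_cong) (simp add: qform_def)
    then show "x = 0" using pdUL assms(5) unfolding pd_def by (metis matrix_mul_rid zero_complex.simps(1) less_irrefl)
  qed
  then obtain R where RP: "R ** P = mat 1" using matrix_left_invertible_ker by blast
  then have PR: "P ** R = mat 1" using matrix_left_right_inverse by blast
  have RPa: "A ** R ** P = A" for A :: "complex^'n^'n"
    by (metis RP matrix_mul_assoc matrix_mul_rid)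
  have cPR: "cadj P ** cadj R = mat 1" using RP by (metis cadj_mult cadj_mat1)
  have bound: "Re (trace (S ** W)) \<le> Re (trace (S ** Z))" if W: "loewner_le L W" "loewner_le W U" for W
  proof -
    define M where "M = W - L"
    have psdM: "psd M" using W(1) by (simp add: loewner_le_def M_def)
    have "cadj P ** P - M = U - W" unfolding assms(5)[symmetric] M_def by (simp add: algebra_simps)
    then have psdUW: "psd (cadj P ** P - M)" using W(2) by (simp add: loewner_le_def)
    define X where "X = cadj (R ** Q) ** M ** (R ** Q)"
    have MX: "cadj P ** Q ** X ** cadj Q ** P = M"
    proof -
      have "cadj P ** Q ** X ** cadj Q ** P = cadj P ** Q ** cadj Q ** cadj R ** M ** R ** Q ** cadj Q ** P"
        by (simp add: X_def cadj_mult matrix_mul_assoc)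
      also have "\<dots> = cadj P ** cadj R ** M ** R ** P" by (simp add: QQa)
      also have "\<dots> = M" by (simp add: cPR RPa)
      finally show ?thesis .
    qed
    have Xii: "0 \<le> Re (X $ i $ i) \<and> Re (X $ i $ i) \<le> 1" for i
    proof -
      define v where "v = (R ** Q) *v axis i 1"
      have Xv: "X $ i $ i = qform M v"
        by (simp add: qform_axis[symmetric] X_def v_def qform_cong)
      have Pv: "P *v v = Q *v axis i 1"
        by (simp add: v_def matrix_vector_mul_assoc matrix_mul_assoc PR)
      have "qform (cadj P ** P) v = qform (cadj P ** mat 1 ** P) v" by simp
      also have "\<dots> = qform (mat 1) (Q *v axis i 1)" by (simp only: qform_cong Pv)
      also have "\<dots> = qform (cadj Q ** mat 1 ** Q) (axis i 1)" by (simp only: qform_cong)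
      also have "\<dots> = 1" unfolding matrix_mul_rid QQ' qform_axis by (simp add: mat_def)
      finally have "qform (cadj P ** P) v = 1" .
      then have "0 \<le> 1 - Re (qform M v)" using psdUW unfolding psd_def qform_diff by (metis one_complex.simps(1) minus_complex.simps(1))
      moreover have "0 \<le> Re (qform M v)" using psdM by (simp add: psd_def)
      ultimately show ?thesis by (simp add: Xv)
    qed
    have "S ** W = S ** L + S ** (cadj P ** Q ** X ** cadj Q ** P)"
      by (simp add: MX M_def matrix_add_ldistrib[symmetric])
    then have "Re (trace (S ** W)) = Re (trace (S ** L)) + (\<Sum>i\<in>UNIV. lam $ i * Re (X $ i $ i))"
      by (simp add: trace_add trf)
    also have "\<dots> \<le> Re (trace (S ** L)) + (\<Sum>i\<in>UNIV. if lam $ i > 0 then lam $ i else 0)"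
    proof -
      have "lam $ i * Re (X $ i $ i) \<le> (if lam $ i > 0 then lam $ i else 0)" for i
        using Xii[of i] by (auto intro: mult_left_le mult_nonpos_nonneg)
      then show ?thesis by (intro add_left_mono sum_mono) auto
    qed
    finally show ?thesis using trZ by simp
  qed
  show ?thesis using le1 le2 bound by blast
qed

end
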